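(* Let $F$ be an infinite field, $R$ a finite-dimensional associative unital $F$-algebra and $J$ its Jacobson radical. Then the multiplicative polynomial functions $f:R\to F$ are induced by the polynomial characters of the unit group $(R/J)^\star$: every such $f$ restricted to $R^\star$ is a character of $R^\star$ that is trivial on $1+J$, hence factors through a polynomial character of $(R/J)^\star=R^\star/(1+J)$, and $f$ is determined by this character.
   Context: A polynomial function $f:R\to F$ is multiplicative if $f(ab)=f(a)f(b)$ for all $a,b\in R$. $R^\star$ denotes the group of invertible elements of $R$; a character of an algebraic group is an algebraic group homomorphism to $F^\star$, and a polynomial character of $(R/J)^\star$ is one given by (the restriction of) a polynomial function on $R/J$. *)

theory Defs
  imports Complex_Main
begin

definition is_algebra :: "('f::field \<Rightarrow> 'r::ring_1 \<Rightarrow> 'r) \<Rightarrow> bool" where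
  "is_algebra scale \<longleftrightarrow> Vector_Spaces.vector_space scale \<and>
     (\<forall>c x y. scale c (x * y) = scale c x * y \<and> scale c (x * y) = x * scale c y)"

definition fin_dim_algebra :: "('f::field \<Rightarrow> 'r::ring_1 \<Rightarrow> 'r) \<Rightarrow> bool" where
  "fin_dim_algebra scale \<longleftrightarrow> is_algebra scale \<and>
     (\<exists>B. finite B \<and> module.span scale B = UNIV)"

text \<open>Polynomial functions R \<rightarrow> F: the F-algebra of functions generated by
the constants and the F-linear functionals on R (coordinate-free version of
"polynomial in the coordinates with respect to a basis").\<close>
inductive_set polyfun :: "('f::field \<Rightarrow> 'r::ring_1 \<Rightarrow> 'r) \<Rightarrow> ('r \<Rightarrow> 'f) set"
  for scale :: "'f::field \<Rightarrow> 'r::ring_1 \<Rightarrow> 'r" where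
  const: "(\<lambda>_. c) \<in> polyfun scale"
| lin: "Vector_Spaces.linear scale (*) \<phi> \<Longrightarrow> \<phi> \<in> polyfun scale"
| add: "p \<in> polyfun scale \<Longrightarrow> q \<in> polyfun scale \<Longrightarrow> (\<lambda>x. p x + q x) \<in> polyfun scale"
| mult: "p \<in> polyfun scale \<Longrightarrow> q \<in> polyfun scale \<Longrightarrow> (\<lambda>x. p x * q x) \<in> polyfun scale"

definition multiplicative :: "('r::ring_1 \<Rightarrow> 'f::field) \<Rightarrow> bool" where
  "multiplicative f \<longleftrightarrow> (\<forall>a b. f (a * b) = f a * f b)"

definition ring_units :: "'r::ring_1 set" where
  "ring_units = {u. \<exists>v. u * v = 1 \<and> v * u = 1}"

definition left_ideal :: "'r::ring_1 set \<Rightarrow> bool" where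
  "left_ideal I \<longleftrightarrow> 0 \<in> I \<and> (\<forall>x\<in>I. \<forall>y\<in>I. x + y \<in> I) \<and> (\<forall>x\<in>I. - x \<in> I)
     \<and> (\<forall>r. \<forall>x\<in>I. r * x \<in> I)"

definition maximal_left_ideal :: "'r::ring_1 set \<Rightarrow> bool" where
  "maximal_left_ideal I \<longleftrightarrow> left_ideal I \<and> I \<noteq> UNIV \<and>
     (\<forall>K. left_ideal K \<and> I \<subseteq> K \<and> K \<noteq> UNIV \<longrightarrow> K = I)"

definition jacobson :: "'r::ring_1 set" where
  "jacobson = \<Inter>{I. maximal_left_ideal I}"

end

theory Submission imports Defs "HOL-Computational_Algebra.Polynomial"
begin

context
  fixes scale :: "'f::field \<Rightarrow> 'r::ring_1 \<Rightarrow> 'r"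
  assumes fda: "fin_dim_algebra scale"
begin

interpretation V: vector_space scale
  using fda by (simp add: fin_dim_algebra_def is_algebra_def)

lemma sc_left: "scale c (x * y) = scale c x * y"
  using fda by (simp add: fin_dim_algebra_def is_algebra_def)
lemma sc_right: "scale c (x * y) = x * scale c y"
  using fda unfolding fin_dim_algebra_def is_algebra_def by blast

lemma sc_one: "scale c x = scale c 1 * x"
  by (metis mult_1_left sc_left)

lemma sc_pow: "(scale s x) ^ k = scale (s ^ k) (x ^ k)"
proof (induction k)
  case 0
  then show ?case by simp
next
  case (Suc k)
  have "scale s x ^ Suc k = scale s x * scale (s ^ k) (x ^ k)" using Suc by simp
  also have "\<dots> = scale s (scale (s^k) (x * x^k))" by (metis sc_left sc_right)
  finally show ?case by simp
qed

lemma fin_basis: obtains Basis where "finite_dimensional_vector_space scale Basis"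
proof -
  obtain B where B: "finite B" "V.span B = UNIV" using fda by (auto simp: fin_dim_algebra_def)
  obtain B' where "B' \<subseteq> B" "V.independent B'" "B \<subseteq> V.span B'"
    using V.maximal_independent_subset by blast
  then have "finite B'" "V.span B' = UNIV"
    using B finite_subset V.span_mono V.span_span
    by (metis, metis top.extremum_uniqueI)
  show ?thesis
  proof (rule that)
    show "finite_dimensional_vector_space scale B'"
      by unfold_locales (use \<open>finite B'\<close> \<open>V.span B' = UNIV\<close> \<open>V.independent B'\<close> in auto)
  qed
qed

lemma left_ideal_subspace: "left_ideal I \<Longrightarrow> V.subspace I"
  unfolding left_ideal_def V.subspace_def by (metis sc_one)

end

context
  fixes scale :: "'f::field \<Rightarrow> 'r::ring_1 \<Rightarrow> 'r" and Basis :: "'r set"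
  assumes fda: "fin_dim_algebra scale"
    and fdv: "finite_dimensional_vector_space scale Basis"
begin

interpretation FD: finite_dimensional_vector_space scale Basis by (rule fdv)

lemma lmult_linear: "Vector_Spaces.linear scale scale (\<lambda>y. u * y)"
  by (unfold_locales) (auto simp: algebra_simps sc_right[OF fda])

lemma unit_of_inj:
  fixes u :: 'r
  assumes "\<And>y. u * y = 0 \<Longrightarrow> y = 0"
  shows "u \<in> ring_units"
proof -
  have injU: "inj (\<lambda>y. u * y)"
    by (rule injI) (metis assms eq_iff_diff_eq_0 right_diff_distrib)
  have "surj (\<lambda>y. u * y)" by (rule FD.linear_inj_imp_surj[OF lmult_linear injU])
  then obtain w where w: "u * w = 1" by (metis surjD)
  have "inj (\<lambda>y. w * y)"
  proof (rule injI)
    fix a b assume "w * a = w * b"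
    then have "u * w * a = u * w * b" by (simp add: mult.assoc)
    then show "a = b" using w by simp
  qed
  then have "surj (\<lambda>y. w * y)" by (rule FD.linear_inj_imp_surj[OF lmult_linear])
  then obtain z where z: "w * z = 1" by (metis surjD)
  have "u = z" by (metis w z mult.assoc mult_1_left mult_1_right)
  then show ?thesis unfolding ring_units_def using w z by blast
qed

lemma left_inv_unit:
  assumes "w * (u::'r) = 1" shows "u \<in> ring_units"
  by (rule unit_of_inj) (metis assms mult.assoc mult_1_left mult_zero_right)

lemma exists_maximal:
  assumes L: "left_ideal (L::'r set)" "L \<noteq> UNIV"
  shows "\<exists>M. maximal_left_ideal M \<and> L \<subseteq> M"
proof -
  define S where "S = {FD.dim K | K. left_ideal K \<and> L \<subseteq> K \<and> K \<noteq> UNIV}"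
  have fin: "finite S"
    by (rule finite_subset[of _ "{..FD.dimension}"]) (auto simp: S_def FD.dim_subset_UNIV)
  have ne: "S \<noteq> {}" using L unfolding S_def by blast
  define m where "m = Max S"
  have "m \<in> S" unfolding m_def using Max_in[OF fin ne] .
  then obtain K0 where K0: "left_ideal K0" "L \<subseteq> K0" "K0 \<noteq> UNIV" "FD.dim K0 = m"
    unfolding S_def by blast
  have "maximal_left_ideal K0"
    unfolding maximal_left_ideal_def
  proof (intro conjI allI impI)
    fix K assume K: "left_ideal K \<and> K0 \<subseteq> K \<and> K \<noteq> UNIV"
    then have "FD.dim K \<in> S" using K0 unfolding S_def by blast
    then have "FD.dim K \<le> FD.dim K0" using K0 fin unfolding m_def by simp
    then show "K = K0"
      using FD.subspace_dim_equal[of K0 K] K K0 left_ideal_subspace[OF fda] by auto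
  qed (use K0 in auto)
  then show ?thesis using K0 by blast
qed

lemma jac_left: "j \<in> jacobson \<Longrightarrow> r * j \<in> jacobson"
proof -
  assume j: "j \<in> jacobson"
  have "r * j \<in> M" if "maximal_left_ideal M" for M
  proof -
    have "j \<in> M" using j that unfolding jacobson_def by blast
    moreover have "left_ideal M" using that unfolding maximal_left_ideal_def by blast
    ultimately show ?thesis unfolding left_ideal_def by blast
  qed
  then show ?thesis unfolding jacobson_def by blast
qed

lemma jac_left_inv:
  assumes "(x::'r) \<in> jacobson" shows "\<exists>w. w * (1 + x) = 1"
proof (rule ccontr)
  assume na: "\<not> ?thesis"
  define L where "L = range (\<lambda>r. r * (1 + x))"
  have "left_ideal L" unfolding left_ideal_def L_def
  proof (intro conjI ballI allI)
    show "0 \<in> range (\<lambda>r. r * (1 + x))" by (rule image_eqI[of _ _ 0]) auto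
  next
    fix a b assume "a \<in> range (\<lambda>r. r * (1 + x))" "b \<in> range (\<lambda>r. r * (1 + x))"
    then obtain ra rb where "a = ra * (1 + x)" "b = rb * (1 + x)" by blast
    then show "a + b \<in> range (\<lambda>r. r * (1 + x))"
      by (intro image_eqI[of _ _ "ra + rb"]) (auto simp: distrib_right)
  next
    fix a assume "a \<in> range (\<lambda>r. r * (1 + x))"
    then obtain ra where "a = ra * (1 + x)" by blast
    then show "- a \<in> range (\<lambda>r. r * (1 + x))"
      by (intro image_eqI[of _ _ "- ra"]) auto
  next
    fix r a assume "a \<in> range (\<lambda>r. r * (1 + x))"
    then obtain ra where "a = ra * (1 + x)" by blast
    then show "r * a \<in> range (\<lambda>r. r * (1 + x))"
      by (intro image_eqI[of _ _ "r * ra"]) (auto simp: mult.assoc)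
  qed
  moreover have "L \<noteq> UNIV"
  proof
    assume "L = UNIV"
    then have "1 \<in> L" by simp
    then show False using na unfolding L_def by auto
  qed
  ultimately obtain M where M: "maximal_left_ideal M" "L \<subseteq> M" using exists_maximal by blast
  have MI: "left_ideal M" "M \<noteq> UNIV" using M(1) unfolding maximal_left_ideal_def by auto
  have xM: "x \<in> M" using assms M(1) unfolding jacobson_def by blast
  have "1 * (1 + x) \<in> L" unfolding L_def by (rule rangeI)
  then have "1 + x \<in> M" using M(2) by auto
  moreover have "- x \<in> M" using xM MI(1) unfolding left_ideal_def by blast
  ultimately have "(1 + x) + (- x) \<in> M" using MI(1) unfolding left_ideal_def by blast
  then have "1 \<in> M" by simp
  then have "r * 1 \<in> M" for r using MI(1) unfolding left_ideal_def by blast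
  then have "M = UNIV" by auto
  then show False using MI by blast
qed

lemma jac_nilpotent:
  assumes "(j::'r) \<in> jacobson" shows "\<exists>k. j ^ k = 0"
proof -
  define W where "W k = range (\<lambda>x. x * j ^ k)" for k
  have sub: "FD.subspace (W k)" for k
    unfolding FD.subspace_def W_def
  proof (intro conjI ballI allI)
    show "0 \<in> range (\<lambda>x. x * j ^ k)" by (rule image_eqI[of _ _ 0]) auto
  next
    fix a b assume "a \<in> range (\<lambda>x. x * j ^ k)" "b \<in> range (\<lambda>x. x * j ^ k)"
    then obtain ra rb where "a = ra * j ^ k" "b = rb * j ^ k" by blast
    then show "a + b \<in> range (\<lambda>x. x * j ^ k)"
      by (intro image_eqI[of _ _ "ra + rb"]) (auto simp: distrib_right)
  next
    fix c a assume "a \<in> range (\<lambda>x. x * j ^ k)"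
    then obtain ra where "a = ra * j ^ k" by blast
    then show "scale c a \<in> range (\<lambda>x. x * j ^ k)"
      by (intro image_eqI[of _ _ "scale c ra"]) (auto simp: sc_left[OF fda])
  qed
  have mono: "W (Suc k) \<subseteq> W k" for k
  proof
    fix a assume "a \<in> W (Suc k)"
    then obtain x where "a = x * j ^ Suc k" unfolding W_def by blast
    then have "a = (x * j) * j ^ k" by (simp add: mult.assoc)
    then show "a \<in> W k" unfolding W_def by blast
  qed
  have "\<exists>k. W (Suc k) = W k"
  proof (rule ccontr)
    assume nk: "\<not> ?thesis"
    then have lt: "FD.dim (W (Suc k)) < FD.dim (W k)" for k
    proof -
      have e: "FD.span (W (Suc k)) = W (Suc k)" "FD.span (W k) = W k" using sub FD.span_eq_iff by blast+
      have "W (Suc k) \<subset> W k" using mono[of k] nk by blast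
      then show ?thesis using FD.dim_psubset[of "W (Suc k)" "W k"] unfolding e by blast
    qed
    have le: "FD.dim (W k) + k \<le> FD.dim (W 0)" for k
    proof (induction k)
      case (Suc k)
      then show ?case using lt[of k] by simp
    qed simp
    have "FD.dim (W 0) \<le> FD.dimension" by (rule FD.dim_subset_UNIV)
    then show False using le[of "Suc FD.dimension"] by simp
  qed
  then obtain k where k: "W (Suc k) = W k" by blast
  have "j ^ k \<in> W k" unfolding W_def by (rule image_eqI[of _ _ 1]) simp_all
  then obtain r where r: "j ^ k = r * j ^ Suc k" using k unfolding W_def by auto
  have "(- r) * j \<in> jacobson" using assms by (rule jac_left)
  then obtain w where w: "w * (1 + (- r) * j) = 1" using jac_left_inv by blast
  have "(1 + (- r) * j) * j ^ k = j ^ k - r * (j * j ^ k)" by (simp add: algebra_simps)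
  also have "\<dots> = j ^ k - r * j ^ Suc k" by simp
  also have "\<dots> = 0" using r by (metis diff_self)
  finally have "w * ((1 + (- r) * j) * j ^ k) = 0" by simp
  then have "j ^ k = 0" using w by (simp add: mult.assoc[symmetric])
  then show ?thesis by blast
qed

lemma pow_eigen:
  assumes "x * y = scale l y" shows "x ^ i * y = scale (l ^ i) y"
proof (induction i)
  case 0 then show ?case by simp
next
  case (Suc i)
  have "x ^ Suc i * y = x * (x ^ i * y)" by (simp add: mult.assoc)
  also have "\<dots> = scale (l ^ i) (x * y)" using Suc by (simp add: sc_right[OF fda])
  also have "\<dots> = scale (l ^ Suc i) y" using assms by (simp add: mult.commute)
  finally show ?case .
qed

lemma eigen_finite: "finite {s. (x::'r) + scale s 1 \<notin> ring_units}"
proof -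
  define S where "S k = (\<lambda>i. x ^ i) ` {..<k}" for k
  have "\<exists>k. x ^ k \<in> FD.span (S k)"
  proof (rule ccontr)
    assume nk: "\<not> ?thesis"
    have lt: "FD.dim (S k) < FD.dim (S (Suc k))" for k
    proof -
      have SS: "S (Suc k) = insert (x ^ k) (S k)" unfolding S_def by (simp add: lessThan_Suc)
      have "FD.span (S k) \<subseteq> FD.span (S (Suc k))" unfolding SS by (rule FD.span_mono) blast
      moreover have "x ^ k \<in> FD.span (S (Suc k))" unfolding SS by (rule FD.span_base) simp
      ultimately have "FD.span (S k) \<subset> FD.span (S (Suc k))" using nk by blast
      then show ?thesis by (rule FD.dim_psubset)
    qed
    have ge: "k \<le> FD.dim (S k)" for k
    proof (induction k)
      case (Suc k) then show ?case using lt[of k] by simp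
    qed simp
    have "FD.dim (S (Suc FD.dimension)) \<le> FD.dimension" by (rule FD.dim_subset_UNIV)
    then show False using ge[of "Suc FD.dimension"] by simp
  qed
  then obtain k where k: "x ^ k \<in> FD.span (S k)" by blast
  have "\<forall>v\<in>FD.span (S k). \<exists>P. coeff P k = 0 \<and>
          (\<forall>y l. x * y = scale l y \<longrightarrow> v * y = scale (poly P l) y)"
  proof
    fix v assume "v \<in> FD.span (S k)"
    then show "\<exists>P. coeff P k = 0 \<and> (\<forall>y l. x * y = scale l y \<longrightarrow> v * y = scale (poly P l) y)"
    proof (induction rule: FD.span_induct_alt)
      case base
      show ?case by (rule exI[of _ 0]) simp
    next
      case (step c z w)
      then obtain i where i: "i < k" "z = x ^ i" unfolding S_def by blast
      from step obtain P where P: "coeff P k = 0"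
        "\<forall>y l. x * y = scale l y \<longrightarrow> w * y = scale (poly P l) y" by blast
      show ?case
      proof (rule exI[of _ "monom c i + P"], intro conjI allI impI)
        show "coeff (monom c i + P) k = 0" using P i by (simp add: coeff_monom)
      next
        fix y l assume e: "x * y = scale l y"
        have "(scale c z + w) * y = scale c (z * y) + w * y"
          by (simp add: distrib_right sc_left[OF fda])
        also have "\<dots> = scale c (scale (l ^ i) y) + scale (poly P l) y"
          using pow_eigen[OF e, of i] P e i by simp
        also have "\<dots> = scale (poly (monom c i + P) l) y"
          by (simp add: poly_monom FD.scale_left_distrib)
        finally show "(scale c z + w) * y = scale (poly (monom c i + P) l) y" .
      qed
    qed
  qed
  with k obtain P where P: "coeff P k = 0"
    "\<And>y l. x * y = scale l y \<Longrightarrow> x ^ k * y = scale (poly P l) y" by blast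
  define Q where "Q = monom 1 k - P"
  have Q0: "Q \<noteq> 0"
  proof
    assume "Q = 0"
    then have "coeff Q k = 0" by simp
    then show False using P(1) unfolding Q_def by (simp add: coeff_monom)
  qed
  have "{s. x + scale s 1 \<notin> ring_units} \<subseteq> uminus ` {l. poly Q l = 0}"
  proof
    fix s assume "s \<in> {s. x + scale s 1 \<notin> ring_units}"
    then have nu: "x + scale s 1 \<notin> ring_units" by simp
    obtain y where y: "(x + scale s 1) * y = 0" "y \<noteq> 0"
      using unit_of_inj nu by blast
    have "x * y = - (scale s 1 * y)" using y(1) by (simp add: distrib_right add_eq_0_iff2)
    also have "\<dots> = scale (- s) y" using sc_one[OF fda, of s y] by simp
    finally have e: "x * y = scale (- s) y" .
    have "scale ((- s) ^ k) y = scale (poly P (- s)) y"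
      using pow_eigen[OF e, of k] P(2)[OF e] by metis
    then have "scale ((- s) ^ k - poly P (- s)) y = 0"
      by (simp add: FD.scale_left_diff_distrib)
    then have "(- s) ^ k - poly P (- s) = 0" using y(2) by simp
    then have "poly Q (- s) = 0" unfolding Q_def by (simp add: poly_monom)
    then show "s \<in> uminus ` {l. poly Q l = 0}" by (rule_tac image_eqI[of _ _ "- s"]) auto
  qed
  moreover have "finite (uminus ` {l. poly Q l = 0})" using poly_roots_finite[OF Q0] by simp
  ultimately show ?thesis by (rule finite_subset)
qed

end

lemma polyfun_line:
  fixes scale :: "'f::field \<Rightarrow> 'r::ring_1 \<Rightarrow> 'r"
  assumes "p \<in> polyfun scale" shows "\<exists>P. \<forall>s. p (a + scale s b) = poly P s"
  using assms
proof (induction rule: polyfun.induct)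
  case (const c) show ?case by (rule exI[of _ "[:c:]"]) simp
next
  case (lin \<phi>)
  then have "\<phi> (a + scale s b) = \<phi> a + s * \<phi> b" for s by (simp add: Vector_Spaces.linear_iff)
  then show ?case by (intro exI[of _ "[:\<phi> a, \<phi> b:]"]) (simp add: mult.commute)
next
  case (add p q)
  then obtain P Q where "\<forall>s. p (a + scale s b) = poly P s" "\<forall>s. q (a + scale s b) = poly Q s" by blast
  then show ?case by (intro exI[of _ "P + Q"]) simp
next
  case (mult p q)
  then obtain P Q where "\<forall>s. p (a + scale s b) = poly P s" "\<forall>s. q (a + scale s b) = poly Q s" by blast
  then show ?case by (intro exI[of _ "P * Q"]) simp
qed

lemma polyfun_shift:
  fixes scale :: "'f::field \<Rightarrow> 'r::ring_1 \<Rightarrow> 'r"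
  assumes "p \<in> polyfun scale" shows "(\<lambda>x. p (x + c)) \<in> polyfun scale"
  using assms
proof (induction rule: polyfun.induct)
  case (const c) show ?case by (rule polyfun.const)
next
  case (lin \<phi>)
  then have "(\<lambda>x. \<phi> (x + c)) = (\<lambda>x. \<phi> x + (\<lambda>_. \<phi> c) x)" by (simp add: Vector_Spaces.linear_iff)
  also have "\<dots> \<in> polyfun scale" by (rule polyfun.add[OF polyfun.lin[OF lin] polyfun.const])
  finally show ?case .
next
  case (add p q) show ?case by (rule polyfun.add[OF add.IH(1) add.IH(2)])
next
  case (mult p q) show ?case by (rule polyfun.mult[OF mult.IH(1) mult.IH(2)])
qed

lemma poly_zero_cofinite:
  fixes P :: "'f::field poly"
  assumes "infinite (UNIV :: 'f set)" "finite E" "\<And>s. s \<notin> E \<Longrightarrow> poly P s = 0"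
  shows "P = 0"
proof (rule ccontr)
  assume "P \<noteq> 0"
  then have "finite {s. poly P s = 0}" by (rule poly_roots_finite)
  then have "finite (E \<union> {s. poly P s = 0})" using assms(2) by simp
  moreover have "UNIV \<subseteq> E \<union> {s. poly P s = 0}" using assms(3) by blast
  ultimately show False using assms(1) finite_subset by blast
qed

context
  fixes scale :: "'f::field \<Rightarrow> 'r::ring_1 \<Rightarrow> 'r" and Basis :: "'r set"
  assumes fda: "fin_dim_algebra scale"
    and fdv: "finite_dimensional_vector_space scale Basis"
    and inf: "infinite (UNIV :: 'f set)"
begin

interpretation FD: finite_dimensional_vector_space scale Basis by (rule fdv)

lemma agree:
  assumes "p \<in> polyfun scale" "q \<in> polyfun scale" "\<forall>u\<in>ring_units. p u = q u"
  shows "p x = q x"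
proof -
  obtain P where P: "\<forall>s. p (x + scale s 1) = poly P s" using polyfun_line[OF assms(1)] by blast
  obtain Q where Q: "\<forall>s. q (x + scale s 1) = poly Q s" using polyfun_line[OF assms(2)] by blast
  have "P - Q = 0"
  proof (rule poly_zero_cofinite[OF inf eigen_finite[OF fda fdv, of x]])
    fix s assume "s \<notin> {s. x + scale s 1 \<notin> ring_units}"
    then have "p (x + scale s 1) = q (x + scale s 1)" using assms(3) by simp
    then show "poly (P - Q) s = 0" using P Q by simp
  qed
  then have "poly P 0 = poly Q 0" by simp
  then show ?thesis using P Q by (metis FD.scale_zero_left add_0_right)
qed

lemma nil_one:
  assumes f: "f \<in> polyfun scale" "multiplicative f" "f 1 = 1"
  shows "x ^ m = 0 \<Longrightarrow> f (1 + x) = 1"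
proof (induction m arbitrary: x rule: less_induct)
  case (less m x)
  show ?case
  proof (cases "m < 2")
    case True
    then have "x = 0"
    proof (cases "m = 0")
      case True
      then have "(1::'r) = 0" using less.prems by simp
      then show ?thesis by (metis mult_1_right mult_zero_right)
    next
      case False
      then have "m = 1" using True by simp
      then show ?thesis using less.prems by simp
    qed
    then show ?thesis using f by simp
  next
    case False
    have H: "f (1 + scale s x) * f (1 + scale (- s) x) = 1" for s
    proof -
      define a where "a = scale s x"
      define y where "y = - (a * a)"
      have y1: "y ^ (m - 1) = (-1) ^ (m - 1) * (a * a) ^ (m - 1)"
        unfolding y_def by (rule power_minus)
      have "a * a = a ^ 2" by (simp only: power2_eq_square)
      then have y2: "(a * a) ^ (m - 1) = a ^ (2 * (m - 1))" by (simp only: power_mult)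
      have y3: "a ^ (2 * (m - 1)) = scale (s ^ (2 * (m - 1))) (x ^ (2 * (m - 1)))"
        unfolding a_def by (rule sc_pow[OF fda])
      have "2 * (m - 1) = m + (m - 2)" using False by simp
      then have "x ^ (2 * (m - 1)) = x ^ m * x ^ (m - 2)" by (simp only: power_add)
      then have y4: "x ^ (2 * (m - 1)) = 0" using less.prems by simp
      have "y ^ (m - 1) = 0" unfolding y1 y2 y3 y4 by simp
      then have "f (1 + y) = 1" using less.IH[of "m - 1" y] False by simp
      moreover have "(1 + scale s x) * (1 + scale (- s) x) = 1 + y"
      proof -
        have "scale (- s) x = - a" unfolding a_def by (rule FD.scale_minus_left)
        then have "(1 + scale s x) * (1 + scale (- s) x) = (1 + a) * (1 + - a)" unfolding a_def by simp
        also have "\<dots> = 1 + y" unfolding y_def by (simp add: algebra_simps)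
        finally show ?thesis .
      qed
      ultimately show ?thesis using f(2) unfolding multiplicative_def by metis
    qed
    obtain h where h: "\<forall>s. f (1 + scale s x) = poly h s" using polyfun_line[OF f(1)] by blast
    have "h * pcompose h [:0, -1:] - 1 = 0"
    proof (rule poly_zero_cofinite[OF inf, of "{}"])
      fix s
      show "poly (h * pcompose h [:0, -1:] - 1) s = 0"
      proof -
        have e1: "f (1 + scale s x) = poly h s" and e2: "f (1 + scale (- s) x) = poly h (- s)"
          using h by blast+
        have "poly h s * poly h (- s) = 1" using H[of s] unfolding e1 e2 .
        then show ?thesis by (simp add: poly_pcompose)
      qed
    qed simp
    then have "h dvd 1" by (metis dvdI eq_iff_diff_eq_0)
    then obtain c where c: "h = [:c:]" using is_unit_poly_iff by blast
    have "f (1 + x) = poly h 1" using h by (metis FD.scale_one)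
    also have "\<dots> = poly h 0" using c by simp
    also have "\<dots> = f 1" using h by (metis FD.scale_zero_left add_0_right)
    finally show ?thesis using f by simp
  qed
qed

end

theorem lemma3p1:
  fixes scale :: "'f::field \<Rightarrow> 'r::ring_1 \<Rightarrow> 'r"
    and f :: "'r \<Rightarrow> 'f"
  assumes "infinite (UNIV :: 'f set)"
    and "fin_dim_algebra scale"
    and "f \<in> polyfun scale" and "multiplicative f" and "f \<noteq> (\<lambda>_. 0)"
  shows "(\<forall>u\<in>ring_units. f u \<noteq> 0)
       \<and> (\<forall>u\<in>ring_units. \<forall>v\<in>ring_units. f (u * v) = f u * f v)
       \<and> (\<forall>j\<in>jacobson. f (1 + j) = 1)
       \<and> (\<exists>g. g \<in> polyfun scale
              \<and> (\<forall>x. \<forall>j\<in>jacobson. g (x + j) = g x)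
              \<and> (\<forall>u\<in>ring_units. \<forall>v\<in>ring_units. g (u * v) = g u * g v)
              \<and> (\<forall>u\<in>ring_units. f u = g u))
       \<and> (\<forall>f'. f' \<in> polyfun scale \<and> multiplicative f' \<and> (\<forall>u\<in>ring_units. f' u = f u)
              \<longrightarrow> f' = f)"
proof -
  obtain Basis where fdv: "finite_dimensional_vector_space scale Basis"
    using fin_basis[OF assms(2)] by blast
  note inf = assms(1) and fda = assms(2) and fp = assms(3) and fm = assms(4)
  obtain z where "f z \<noteq> 0" using assms(5) by auto
  moreover have "f z = f 1 * f z" using fm unfolding multiplicative_def by (metis mult_1_left)
  ultimately have f1: "f 1 = 1" by simp
  have P1: "\<forall>u\<in>ring_units. f u \<noteq> 0"
  proof
    fix u :: 'r assume "u \<in> ring_units"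
    then obtain v where "u * v = 1" unfolding ring_units_def by blast
    then have "f u * f v = 1" using fm f1 unfolding multiplicative_def by metis
    then show "f u \<noteq> 0" by auto
  qed
  have P2: "\<forall>u\<in>ring_units. \<forall>v\<in>ring_units. f (u * v) = f u * f v"
    using fm unfolding multiplicative_def by blast
  have P3: "\<forall>j\<in>jacobson. f (1 + j) = 1"
  proof
    fix j :: 'r assume "j \<in> jacobson"
    then obtain k where "j ^ k = 0" using jac_nilpotent[OF fda fdv] by blast
    then show "f (1 + j) = 1" using nil_one[OF fda fdv inf fp fm f1] by blast
  qed
  have P4: "\<forall>x. \<forall>j\<in>jacobson. f (x + j) = f x"
  proof (intro allI ballI)
    fix x j :: 'r assume j: "j \<in> jacobson"
    have "(\<lambda>x. f (x + j)) x = f x"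
    proof (rule agree[OF fda fdv inf polyfun_shift[OF fp] fp], intro ballI)
      fix u :: 'r assume "u \<in> ring_units"
      then obtain v where uv: "u * v = 1" unfolding ring_units_def by blast
      have "u * (1 + v * j) = u + j" using uv by (simp add: algebra_simps mult.assoc[symmetric])
      moreover have "v * j \<in> jacobson" using j by (rule jac_left[OF fda fdv])
      then have "f (1 + v * j) = 1" using P3 by blast
      ultimately show "f (u + j) = f u" using fm unfolding multiplicative_def by (metis mult_1_right)
    qed
    then show "f (x + j) = f x" by simp
  qed
  have P5: "\<forall>f'. f' \<in> polyfun scale \<and> multiplicative f' \<and> (\<forall>u\<in>ring_units. f' u = f u) \<longrightarrow> f' = f"
  proof (intro allI impI)
    fix f' assume "f' \<in> polyfun scale \<and> multiplicative f' \<and> (\<forall>u\<in>ring_units. f' u = f u)"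
    then show "f' = f" using agree[OF fda fdv inf _ fp] by blast
  qed
  show ?thesis using P1 P2 P3 P4 P5 fp by blast
qed

end
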